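(* Let $n\geq 2$ and let $\mathcal{G}=(\mathcal{V},\mathcal{E})$ be a directed graph on $\mathcal{V}=\{1,\ldots,n\}$ in which every node has at least one outgoing edge, with hyperlink matrix $A$, let $m\in(0,1)$, let $x^*$ be the PageRank vector, and let $Q=(1-m)A$. Let $\mathcal{V}_1,\ldots,\mathcal{V}_N$ ($1\leq N\leq n$) be a partition of $\mathcal{V}$ into nonempty groups of consecutive indices, $\mathcal{V}_1=\{1,\ldots,l_1\}$, $\mathcal{V}_2=\{l_1+1,\ldots,l_1+l_2\}$, $\ldots$, $\mathcal{V}_N=\{n-l_N+1,\ldots,n\}$, and partition $Q$ into blocks $\check{Q}_{hg}\in\mathbb{R}^{l_h\times l_g}$ accordingly; likewise write $x(k)=(\check{x}_1(k)^T,\ldots,\check{x}_N(k)^T)^T$ and $z(k)=(\check{z}_1(k)^T,\ldots,\check{z}_N(k)^T)^T$ with $\check{x}_h(k),\check{z}_h(k)\in\mathbb{R}^{l_h}$. Let $\{\psi(k)\}_{k\geq 0}$ be any sequence in $\{1,\ldots,N\}$. Consider the algorithm with $\check{x}_h(0)=\check{z}_h(0)=\frac{m}{n}\mathbf{1}_{l_h}$ for all $h$, and for $k\geq 0$ and each $h$, $$\check{x}_h(k+1)=\check{x}_h(k)+\check{Q}_{h\psi(k)}\big(I-\check{Q}_{\psi(k)\psi(k)}\big)^{-1}\check{z}_{\psi(k)}(k),$$ $$\check{z}_h(k+1)=\begin{cases}0&\text{if } h=\psi(k),\\ \check{z}_h(k)+\check{Q}_{h\psi(k)}\big(I-\check{Q}_{\psi(k)\psi(k)}\big)^{-1}\check{z}_{\psi(k)}(k)&\text{otherwise.}\end{cases}$$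 Then $x(k)\leq x(k+1)\leq x^*$ for all $k\geq 0$.
   Context: Write $(i,j)\in\mathcal{E}$ if page $i$ has a link to page $j$. $\mathcal{L}_j^{\text{out}}=\{i:(j,i)\in\mathcal{E}\}$ and $n_j=|\mathcal{L}_j^{\text{out}}|\geq 1$. The hyperlink matrix $A=(a_{ij})$ is defined by $a_{ij}=1/n_j$ if $i\in\mathcal{L}_j^{\text{out}}$ and $a_{ij}=0$ otherwise (column stochastic). The PageRank vector $x^*$ satisfies $x^*=(1-m)Ax^*+\frac{m}{n}\mathbf{1}_n$ and $\mathbf{1}_n^Tx^*=1$. Each diagonal block $\check{Q}_{hh}$ is a nonnegative principal submatrix of the Schur stable matrix $Q$, so $I-\check{Q}_{hh}$ is invertible. Inequalities between vectors are entrywise. *)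

theory Defs
  imports "Jordan_Normal_Form.Gauss_Jordan_Elimination"
begin

text \<open>Nodes are 0-indexed: V = {0..<n}. E is a set of directed edges (i,j) meaning page i links to page j.\<close>

definition out_links :: "(nat \<times> nat) set \<Rightarrow> nat \<Rightarrow> nat set" where
  "out_links E j = {i. (j, i) \<in> E}"

definition hyperlink_matrix :: "nat \<Rightarrow> (nat \<times> nat) set \<Rightarrow> real mat" where
  "hyperlink_matrix n E = mat n n (\<lambda>(i, j).
      if i \<in> out_links E j then 1 / real (card (out_links E j)) else 0)"

definition is_pagerank :: "nat \<Rightarrow> real mat \<Rightarrow> real \<Rightarrow> real vec \<Rightarrow> bool" where
  "is_pagerank n A m x \<longleftrightarrow> x \<in> carrier_vec n \<and>
     x = (1 - m) \<cdot>\<^sub>m A *\<^sub>v x + (m / real n) \<cdot>\<^sub>v (vec n (\<lambda>_. 1)) \<and>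
     (\<Sum>i<n. x $ i) = 1"

text \<open>Block partition into consecutive groups of sizes l 0, ..., l (N-1);
  block h starts at offset blk_off l h.\<close>

definition blk_off :: "(nat \<Rightarrow> nat) \<Rightarrow> nat \<Rightarrow> nat" where
  "blk_off l h = (\<Sum>g<h. l g)"

definition blk_vec :: "(nat \<Rightarrow> nat) \<Rightarrow> real vec \<Rightarrow> nat \<Rightarrow> real vec" where
  "blk_vec l v h = vec (l h) (\<lambda>i. v $ (blk_off l h + i))"

definition blk_mat :: "(nat \<Rightarrow> nat) \<Rightarrow> real mat \<Rightarrow> nat \<Rightarrow> nat \<Rightarrow> real mat" where
  "blk_mat l Q h g = mat (l h) (l g) (\<lambda>(i, j). Q $$ (blk_off l h + i, blk_off l g + j))"

definition blk_update :: "(nat \<Rightarrow> nat) \<Rightarrow> real mat \<Rightarrow> nat \<Rightarrow> nat \<Rightarrow> real vec \<Rightarrow> real vec" where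
  "blk_update l Q h p z = blk_mat l Q h p *\<^sub>v
     (the (mat_inverse (1\<^sub>m (l p) - blk_mat l Q p p)) *\<^sub>v blk_vec l z p)"

end

theory Submission imports Defs "Jordan_Normal_Form.Determinant" begin

lemma nonneg_fix:
  fixes M :: "nat \<Rightarrow> nat \<Rightarrow> real" and u z :: "nat \<Rightarrow> real"
  assumes Mnn: "\<forall>i<K. \<forall>j<K. M i j \<ge> 0" and cs: "\<forall>j<K. (\<Sum>i<K. M i j) \<le> c" and c1: "c < 1"
    and zn: "\<forall>i<K. z i \<ge> 0" and fx: "\<forall>i<K. u i = z i + (\<Sum>j<K. M i j * u j)"
  shows "\<forall>i<K. u i \<ge> 0"
proof -
  define v where "v j = max 0 (- u j)" for j
  have vnn: "v j \<ge> 0" for j unfolding v_def by simp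
  have vle: "v i \<le> (\<Sum>j<K. M i j * v j)" if i: "i < K" for i
  proof (cases "u i \<ge> 0")
    case True
    then have "v i = 0" unfolding v_def by simp
    moreover have "0 \<le> (\<Sum>j<K. M i j * v j)"
      using Mnn i vnn by (intro sum_nonneg) (simp add: mult_nonneg_nonneg)
    ultimately show ?thesis by simp
  next
    case False
    then have "v i = - u i" unfolding v_def by simp
    also have "\<dots> = - z i + (\<Sum>j<K. M i j * (- u j))"
    proof -
      have "u i = z i + (\<Sum>j<K. M i j * u j)" using fx i by blast
      then show ?thesis by (simp only: sum_negf mult_minus_right)
    qed
    also have "\<dots> \<le> (\<Sum>j<K. M i j * (- u j))" using zn i by simp
    also have "\<dots> \<le> (\<Sum>j<K. M i j * v j)"
      using Mnn i by (intro sum_mono mult_left_mono) (auto simp: v_def)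
    finally show ?thesis .
  qed
  have "(\<Sum>i<K. v i) \<le> (\<Sum>i<K. \<Sum>j<K. M i j * v j)" using vle by (intro sum_mono) simp
  also have "\<dots> = (\<Sum>j<K. (\<Sum>i<K. M i j) * v j)"
    by (subst sum.swap) (simp add: sum_distrib_right)
  also have "\<dots> \<le> (\<Sum>j<K. c * v j)"
    using cs vnn by (intro sum_mono mult_right_mono) auto
  also have "\<dots> = c * (\<Sum>j<K. v j)" by (simp add: sum_distrib_left)
  finally have le: "(\<Sum>j<K. v j) \<le> c * (\<Sum>j<K. v j)" by simp
  have S0: "(\<Sum>j<K. v j) \<ge> 0" using vnn by (simp add: sum_nonneg)
  have "(\<Sum>j<K. v j) \<le> 0"
  proof (rule ccontr)
    assume "\<not> (\<Sum>j<K. v j) \<le> 0"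
    then have "(\<Sum>j<K. v j) > 0" by simp
    then have "c * (\<Sum>j<K. v j) < 1 * (\<Sum>j<K. v j)" using c1 by (intro mult_strict_right_mono)
    then show False using le by simp
  qed
  then have "(\<Sum>j<K. v j) = 0" using S0 by simp
  then have vz: "\<forall>j<K. v j = 0" using vnn by (simp add: sum_nonneg_eq_0_iff)
  show ?thesis
  proof (intro allI impI)
    fix i assume "i < K"
    then have "max 0 (- u i) = 0" using vz unfolding v_def by blast
    then have "- u i \<le> 0" by (metis max.cobounded2)
    then show "0 \<le> u i" by simp
  qed
qed

lemma IminusA_nth:
  fixes A :: "real mat"
  assumes "A \<in> carrier_mat K K" "v \<in> carrier_vec K" "r < K"
  shows "((1\<^sub>m K - A) *\<^sub>v v) $ r = v $ r - (\<Sum>s<K. A $$ (r, s) * v $ s)"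
proof -
  have "((1\<^sub>m K - A) *\<^sub>v v) $ r = (\<Sum>s<K. ((if r = s then 1 else 0) - A $$ (r, s)) * v $ s)"
    using assms by (simp add: scalar_prod_def lessThan_atLeast0)
  also have "\<dots> = (\<Sum>s<K. (if r = s then v $ s else 0)) - (\<Sum>s<K. A $$ (r, s) * v $ s)"
    by (subst sum_subtractf[symmetric]) (rule sum.cong, auto simp: algebra_simps)
  also have "\<dots> = v $ r - (\<Sum>s<K. A $$ (r, s) * v $ s)" using assms by simp
  finally show ?thesis .
qed

lemma inv_exists:
  fixes A :: "real mat"
  assumes A: "A \<in> carrier_mat K K" and Ann: "\<forall>i<K. \<forall>j<K. A $$ (i,j) \<ge> 0"
    and cs: "\<forall>j<K. (\<Sum>i<K. A $$ (i,j)) \<le> c" and c1: "c < 1"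
  shows "\<exists>B. mat_inverse (1\<^sub>m K - A) = Some B"
proof (rule ccontr)
  assume "\<nexists>B. mat_inverse (1\<^sub>m K - A) = Some B"
  then have N: "mat_inverse (1\<^sub>m K - A) = None" by (cases "mat_inverse (1\<^sub>m K - A)") auto
  have C: "1\<^sub>m K - A \<in> carrier_mat K K" using A by (simp add: minus_carrier_mat)
  have "det (1\<^sub>m K - A) = 0"
  proof (rule ccontr)
    assume "det (1\<^sub>m K - A) \<noteq> 0"
    from det_non_zero_imp_unit[OF C this, where b="()"] mat_inverse(1)[OF C N, where b="()"] show False by blast
  qed
  then obtain v where v: "v \<in> carrier_vec K" "v \<noteq> 0\<^sub>v K" "(1\<^sub>m K - A) *\<^sub>v v = 0\<^sub>v K"
    using det_0_iff_vec_prod_zero[OF C] by auto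
  have eq: "v $ r = (\<Sum>s<K. A $$ (r, s) * v $ s)" if "r < K" for r
    using IminusA_nth[OF A v(1) that] v(3) that
    by (metis (no_types, lifting) eq_iff_diff_eq_0 index_zero_vec(1))
  have p1: "\<forall>i<K. v $ i \<ge> 0"
    by (rule nonneg_fix[where M="\<lambda>i j. A $$ (i,j)" and z="\<lambda>_. 0" and c=c]) (use Ann cs c1 eq in auto)
  have p2: "\<forall>i<K. - v $ i \<ge> 0"
    by (rule nonneg_fix[where M="\<lambda>i j. A $$ (i,j)" and z="\<lambda>_. 0" and c=c and u="\<lambda>i. - v $ i"])
       (use Ann cs c1 eq in \<open>auto simp: sum_negf\<close>)
  have "v = 0\<^sub>v K" using p1 p2 v(1) by (intro eq_vecI) (auto intro: antisym)
  with v(2) show False by simp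
qed

lemma inv_fix:
  fixes M B :: "real mat"
  assumes Bcar: "B \<in> carrier_mat K K" and Binv: "(1\<^sub>m K - M) * B = 1\<^sub>m K"
    and M: "M \<in> carrier_mat K K" and w: "w \<in> carrier_vec K" and s: "s < K"
  shows "(B *\<^sub>v w) $ s = w $ s + (\<Sum>t<K. M $$ (s,t) * (B *\<^sub>v w) $ t)"
proof -
  have c1: "1\<^sub>m K - M \<in> carrier_mat K K" using M by (simp add: minus_carrier_mat)
  have "(1\<^sub>m K - M) *\<^sub>v (B *\<^sub>v w) = ((1\<^sub>m K - M) * B) *\<^sub>v w"
    by (rule assoc_mult_mat_vec[OF c1 Bcar w, symmetric])
  also have "\<dots> = w" unfolding Binv using w by (rule one_mult_mat_vec)
  finally have eq: "(1\<^sub>m K - M) *\<^sub>v (B *\<^sub>v w) = w" .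
  have yc: "B *\<^sub>v w \<in> carrier_vec K" using Bcar w by (rule mult_mat_vec_carrier)
  have "w $ s = (B *\<^sub>v w) $ s - (\<Sum>t<K. M $$ (s, t) * (B *\<^sub>v w) $ t)"
    using IminusA_nth[OF M yc s] unfolding eq .
  then show ?thesis by linarith
qed

lemma off_Suc: "blk_off l (Suc h) = blk_off l h + l h"
  by (simp add: blk_off_def)

lemma off_mono: "h \<le> h' \<Longrightarrow> blk_off l h \<le> blk_off l h'"
  unfolding blk_off_def by (rule sum_mono2) auto

lemma blk_find: "i < blk_off l K \<Longrightarrow> \<exists>h<K. blk_off l h \<le> i \<and> i < blk_off l h + l h"
proof (induction K)
  case 0 then show ?case by (simp add: blk_off_def)
next
  case (Suc K)
  show ?case
  proof (cases "i < blk_off l K")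
    case True then show ?thesis using Suc.IH by (meson less_SucI)
  next
    case False then show ?thesis using Suc.prems by (auto simp: off_Suc intro!: exI[of _ K])
  qed
qed

lemma blk_unique:
  assumes "blk_off l h \<le> i" "i < blk_off l h + l h" "blk_off l h' \<le> i" "i < blk_off l h' + l h'"
  shows "h = h'"
proof (rule ccontr)
  assume "h \<noteq> h'"
  then have "Suc h \<le> h' \<or> Suc h' \<le> h" by auto
  then show False
    using off_mono[of "Suc h" h' l] off_mono[of "Suc h'" h l] assms by (auto simp: off_Suc)
qed

lemma sum_shift: "(\<Sum>s<(K::nat). f (a + s)) = (\<Sum>i\<in>{a..<a+K}. f i)"
  by (induction K) (auto simp: add.commute)

lemma blk_vec_nth: "r < l h \<Longrightarrow> blk_vec l v h $ r = v $ (blk_off l h + r)"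
  by (simp add: blk_vec_def)

lemma blk_vec_dim[simp]: "dim_vec (blk_vec l v h) = l h"
  by (simp add: blk_vec_def)

lemma blk_mat_carrier: "blk_mat l Q h g \<in> carrier_mat (l h) (l g)"
  by (simp add: blk_mat_def)

lemma blk_mat_nth: "r < l h \<Longrightarrow> s < l g \<Longrightarrow> blk_mat l Q h g $$ (r, s) = Q $$ (blk_off l h + r, blk_off l g + s)"
  by (simp add: blk_mat_def)

lemma blk_update_nth:
  assumes B: "B \<in> carrier_mat (l p) (l p)" and Bi: "mat_inverse (1\<^sub>m (l p) - blk_mat l Q p p) = Some B"
    and r: "r < l h"
  shows "blk_update l Q h p z $ r = (\<Sum>s<l p. Q $$ (blk_off l h + r, blk_off l p + s) * (B *\<^sub>v blk_vec l z p) $ s)"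
  using B r unfolding blk_update_def Bi
  by (simp add: blk_mat_def scalar_prod_def lessThan_atLeast0)

lemma blk_update_dim:
  "dim_vec (blk_update l Q h p z) = l h"
  by (simp add: blk_update_def blk_mat_def)

theorem lemma4:
  fixes n N :: nat and E :: "(nat \<times> nat) set" and m :: real
    and xs :: "real vec" and l :: "nat \<Rightarrow> nat" and psi :: "nat \<Rightarrow> nat"
    and x z :: "nat \<Rightarrow> real vec"
  assumes n2: "n \<ge> 2"
    and E_nodes: "E \<subseteq> {0..<n} \<times> {0..<n}"
    and out_nonempty: "\<forall>j<n. out_links E j \<noteq> {}"
    and m: "0 < m" "m < 1"
    and pr: "is_pagerank n (hyperlink_matrix n E) m xs"
    and N: "1 \<le> N" "N \<le> n"
    and l_pos: "\<forall>h<N. 1 \<le> l h"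
    and l_sum: "(\<Sum>h<N. l h) = n"
    and psi: "\<forall>k. psi k < N"
    and dims: "\<forall>k. x k \<in> carrier_vec n \<and> z k \<in> carrier_vec n"
    and init: "x 0 = vec n (\<lambda>_. m / real n)" "z 0 = vec n (\<lambda>_. m / real n)"
    and x_step: "\<forall>k. \<forall>h<N. blk_vec l (x (Suc k)) h =
        blk_vec l (x k) h + blk_update l ((1 - m) \<cdot>\<^sub>m hyperlink_matrix n E) h (psi k) (z k)"
    and z_step: "\<forall>k. \<forall>h<N. blk_vec l (z (Suc k)) h =
        (if h = psi k then 0\<^sub>v (l h)
         else blk_vec l (z k) h + blk_update l ((1 - m) \<cdot>\<^sub>m hyperlink_matrix n E) h (psi k) (z k))"
  shows "\<forall>k. \<forall>i<n. x k $ i \<le> x (Suc k) $ i \<and> x (Suc k) $ i \<le> xs $ i"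
proof -
  define off where "off = blk_off l"
  define Q where "Q = (1 - m) \<cdot>\<^sub>m hyperlink_matrix n E"
  define q where "q i j = Q $$ (i, j)" for i j
  have Qcar: "Q \<in> carrier_mat n n" unfolding Q_def hyperlink_matrix_def by simp
  have q_eq: "q i j = (1 - m) * (if i \<in> out_links E j then 1 / real (card (out_links E j)) else 0)"
    if "i < n" "j < n" for i j
    using that unfolding q_def Q_def hyperlink_matrix_def by simp
  have qnn: "q i j \<ge> 0" if "i < n" "j < n" for i j
    using q_eq[OF that] m by simp
  have qcol: "(\<Sum>i<n. q i j) = 1 - m" if j: "j < n" for j
  proof -
    let ?O = "out_links E j"
    have sub: "?O \<subseteq> {..<n}" using E_nodes unfolding out_links_def by auto
    then have fin: "finite ?O" by (rule finite_subset) simp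
    have ne: "?O \<noteq> {}" using out_nonempty j by blast
    have "(\<Sum>i<n. q i j) = (\<Sum>i<n. (1 - m) * (if i \<in> ?O then 1 / real (card ?O) else 0))"
      using q_eq j by simp
    also have "\<dots> = (1 - m) * (\<Sum>i<n. (if i \<in> ?O then 1 / real (card ?O) else 0))"
      by (simp add: sum_distrib_left)
    also have "(\<Sum>i<n. (if i \<in> ?O then 1 / real (card ?O) else 0)) = (\<Sum>i\<in>{..<n} \<inter> ?O. 1 / real (card ?O))"
      by (subst sum.inter_restrict) auto
    also have "{..<n} \<inter> ?O = ?O" using sub by blast
    also have "(\<Sum>i\<in>?O. 1 / real (card ?O)) = 1" using fin ne by simp
    finally show ?thesis by simp
  qed
  have offN: "off N = n" using l_sum unfolding off_def blk_off_def by simp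
  have blk_le: "off p + l p \<le> n" if "p < N" for p
    using off_mono[of "Suc p" N l] that offN off_Suc[of l p] unfolding off_def by simp
  have colblk: "(\<Sum>r<l p. q (off p + r) (off p + s)) \<le> 1 - m" if p: "p < N" and s: "s < l p" for p s
  proof -
    have "(\<Sum>r<l p. q (off p + r) (off p + s)) = (\<Sum>i\<in>{off p..<off p + l p}. q i (off p + s))"
      by (rule sum_shift)
    also have "\<dots> \<le> (\<Sum>i<n. q i (off p + s))"
      using blk_le[OF p] s by (intro sum_mono2) (auto intro!: qnn)
    also have "\<dots> = 1 - m" using blk_le[OF p] s by (intro qcol) simp
    finally show ?thesis .
  qed
  have Mp_nth: "blk_mat l Q p p $$ (r, s) = q (off p + r) (off p + s)" if "r < l p" "s < l p" for p r s
    using that by (simp add: blk_mat_nth q_def off_def)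
  have invB: "\<exists>B. mat_inverse (1\<^sub>m (l p) - blk_mat l Q p p) = Some B" if p: "p < N" for p
  proof (rule inv_exists[OF blk_mat_carrier _ _ ])
    show "\<forall>i<l p. \<forall>j<l p. 0 \<le> blk_mat l Q p p $$ (i, j)"
      using blk_le[OF p] by (auto simp: Mp_nth intro!: qnn)
    show "\<forall>j<l p. (\<Sum>i<l p. blk_mat l Q p p $$ (i, j)) \<le> 1 - m"
      using colblk[OF p] by (simp add: Mp_nth)
  qed (use m in simp)
  define B where "B k = the (mat_inverse (1\<^sub>m (l (psi k)) - blk_mat l Q (psi k) (psi k)))" for k
  have Bk: "mat_inverse (1\<^sub>m (l (psi k)) - blk_mat l Q (psi k) (psi k)) = Some (B k)" for k
    using invB[of "psi k"] psi unfolding B_def by auto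
  have Bcar: "B k \<in> carrier_mat (l (psi k)) (l (psi k))" 
   and Binv: "(1\<^sub>m (l (psi k)) - blk_mat l Q (psi k) (psi k)) * B k = 1\<^sub>m (l (psi k))" for k
    using mat_inverse(2)[OF _ Bk[of k]] blk_mat_carrier[of l Q "psi k" "psi k"]
    by (auto simp: minus_carrier_mat)
  define y where "y k s = (B k *\<^sub>v blk_vec l (z k) (psi k)) $ s" for k s
  define G where "G k i = (\<Sum>s<l (psi k). q i (off (psi k) + s) * y k s)" for k i
  have F1: "x (Suc k) $ i = x k $ i + G k i" if i: "i < n" for k i
  proof -
    obtain h where h: "h < N" "off h \<le> i" "i < off h + l h"
      using blk_find[of i l N] i offN unfolding off_def by auto
    define r where "r = i - off h"
    have r: "r < l h" "i = off h + r" using h unfolding r_def by auto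
    have "blk_vec l (x (Suc k)) h $ r = (blk_vec l (x k) h + blk_update l Q h (psi k) (z k)) $ r"
      using x_step h(1) unfolding Q_def by simp
    also have "\<dots> = blk_vec l (x k) h $ r + blk_update l Q h (psi k) (z k) $ r"
      using r by (simp add: blk_update_dim)
    finally show ?thesis
      using r by (simp add: blk_vec_nth blk_update_nth[OF Bcar Bk] G_def y_def q_def off_def)
  qed
  have F2: "z (Suc k) $ i = (if off (psi k) \<le> i \<and> i < off (psi k) + l (psi k) then 0 else z k $ i + G k i)"
    if i: "i < n" for k i
  proof -
    obtain h where h: "h < N" "off h \<le> i" "i < off h + l h"
      using blk_find[of i l N] i offN unfolding off_def by auto
    define r where "r = i - off h"
    have r: "r < l h" "i = off h + r" using h unfolding r_def by auto
    show ?thesis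
    proof (cases "h = psi k")
      case True
      have "blk_vec l (z (Suc k)) h $ r = 0\<^sub>v (l h) $ r"
        using z_step h(1) True unfolding Q_def by simp
      then show ?thesis using r True h by (simp add: blk_vec_nth off_def)
    next
      case False
      have nb: "\<not> (off (psi k) \<le> i \<and> i < off (psi k) + l (psi k))"
        using blk_unique[of l h i "psi k"] h False unfolding off_def by auto
      have "blk_vec l (z (Suc k)) h $ r = (blk_vec l (z k) h + blk_update l Q h (psi k) (z k)) $ r"
        using z_step h(1) False unfolding Q_def by simp
      also have "\<dots> = blk_vec l (z k) h $ r + blk_update l Q h (psi k) (z k) $ r"
        using r by (simp add: blk_update_dim)
      finally have "z (Suc k) $ i = z k $ i + G k i"
        using r by (simp add: blk_vec_nth blk_update_nth[OF Bcar Bk] G_def y_def q_def off_def)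
      then show ?thesis using nb by (simp only: if_False)
    qed
  qed
  have F3: "y k s = z k $ (off (psi k) + s) + G k (off (psi k) + s)" if s: "s < l (psi k)" for k s
  proof -
    have wc: "blk_vec l (z k) (psi k) \<in> carrier_vec (l (psi k))" unfolding blk_vec_def by (rule vec_carrier)
    have A: "y k s = blk_vec l (z k) (psi k) $ s
       + (\<Sum>t<l (psi k). blk_mat l Q (psi k) (psi k) $$ (s,t) * y k t)"
      unfolding y_def by (rule inv_fix[OF Bcar Binv blk_mat_carrier wc s])
    have B': "(\<Sum>t<l (psi k). blk_mat l Q (psi k) (psi k) $$ (s,t) * y k t) = G k (off (psi k) + s)"
      unfolding G_def
    proof (rule sum.cong[OF refl])
      fix t assume "t \<in> {..<l (psi k)}"
      then have t: "t < l (psi k)" by simp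
      show "blk_mat l Q (psi k) (psi k) $$ (s, t) * y k t = q (off (psi k) + s) (off (psi k) + t) * y k t"
        by (simp only: Mp_nth[OF s t])
    qed
    have C: "blk_vec l (z k) (psi k) $ s = z k $ (off (psi k) + s)" unfolding off_def by (rule blk_vec_nth[where l=l and h="psi k", OF s])
    show ?thesis using A B' C by linarith
  qed
  have F4: "\<forall>s<l (psi k). y k s \<ge> 0" if zn: "\<forall>i<n. z k $ i \<ge> 0" for k
  proof (rule nonneg_fix[where M="\<lambda>r s. q (off (psi k) + r) (off (psi k) + s)" and c="1 - m"
        and z="\<lambda>r. z k $ (off (psi k) + r)" and u="y k" and K="l (psi k)"])
    have p: "psi k < N" using psi by blast
    show "\<forall>i<l (psi k). \<forall>j<l (psi k). 0 \<le> q (off (psi k) + i) (off (psi k) + j)"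
      using blk_le[OF p] by (auto intro!: qnn)
    show "\<forall>j<l (psi k). (\<Sum>i<l (psi k). q (off (psi k) + i) (off (psi k) + j)) \<le> 1 - m"
      using colblk[OF p] by blast
    show "\<forall>i<l (psi k). 0 \<le> z k $ (off (psi k) + i)" using zn blk_le[OF p] by auto
    show "\<forall>i<l (psi k). y k i = z k $ (off (psi k) + i) + (\<Sum>j<l (psi k). q (off (psi k) + i) (off (psi k) + j) * y k j)"
      using F3 unfolding G_def by blast
  qed (use m in simp)
  have Gnn: "G k i \<ge> 0" if "\<forall>s<l (psi k). y k s \<ge> 0" "i < n" for k i
  proof -
    have p: "psi k < N" using psi by blast
    show ?thesis unfolding G_def using that blk_le[OF p]
      by (intro sum_nonneg mult_nonneg_nonneg) (auto intro!: qnn)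
  qed
  have Znn: "\<forall>i<n. z k $ i \<ge> 0" for k
  proof (induction k)
    case 0 then show ?case using init m by simp
  next
    case (Suc k)
    then show ?case using F2 F4[OF Suc] Gnn[OF F4[OF Suc]] by simp
  qed
  have Mv: "(Q *\<^sub>v v) $ i = (\<Sum>j<n. q i j * v $ j)" if "v \<in> carrier_vec n" "i < n" for v i
    using that Qcar by (simp add: q_def scalar_prod_def lessThan_atLeast0)
  have xsc: "xs \<in> carrier_vec n" using pr unfolding is_pagerank_def by blast
  have xs_eq: "xs $ i = (\<Sum>j<n. q i j * xs $ j) + m / real n" if i: "i < n" for i
  proof -
    have "xs = Q *\<^sub>v xs + (m / real n) \<cdot>\<^sub>v (vec n (\<lambda>_. 1))"
      using pr unfolding is_pagerank_def Q_def by blast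
    then have "xs $ i = (Q *\<^sub>v xs + (m / real n) \<cdot>\<^sub>v (vec n (\<lambda>_. 1))) $ i" by simp
    also have "\<dots> = (Q *\<^sub>v xs) $ i + m / real n" using i Qcar by simp
    finally show ?thesis using Mv[OF xsc i] by simp
  qed
  have Inv: "\<forall>i<n. xs $ i - x k $ i = (\<Sum>j<n. q i j * (xs $ j - x k $ j + z k $ j))" for k
  proof (induction k)
    case 0
    then show ?case using init xs_eq by simp
  next
    case (Suc k)
    define Y where "Y j = (if off (psi k) \<le> j \<and> j < off (psi k) + l (psi k) then y k (j - off (psi k)) else 0)" for j
    have e1: "xs $ j - x (Suc k) $ j + z (Suc k) $ j = xs $ j - x k $ j + z k $ j - Y j" if j: "j < n" for j
    proof (cases "off (psi k) \<le> j \<and> j < off (psi k) + l (psi k)")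
      case True
      then have jl: "j - off (psi k) < l (psi k)" by linarith
      have "y k (j - off (psi k)) = z k $ (off (psi k) + (j - off (psi k))) + G k (off (psi k) + (j - off (psi k)))"
        by (rule F3[OF jl])
      moreover have "off (psi k) + (j - off (psi k)) = j" using True by linarith
      ultimately have yj: "y k (j - off (psi k)) = z k $ j + G k j" by simp
      have z1: "z (Suc k) $ j = 0" using F2[OF j, of k] unfolding if_P[OF True] .
      have Y1: "Y j = y k (j - off (psi k))" unfolding Y_def if_P[OF True] ..
      show ?thesis using yj z1 Y1 F1[OF j, of k] by linarith
    next
      case False
      have z1: "z (Suc k) $ j = z k $ j + G k j" using F2[OF j, of k] unfolding if_not_P[OF False] .
      have Y1: "Y j = 0" unfolding Y_def if_not_P[OF False] ..
      show ?thesis using z1 Y1 F1[OF j, of k] by linarith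
    qed
    have p: "psi k < N" using psi by blast
    have e2: "(\<Sum>j<n. q i j * Y j) = G k i" for i
    proof -
      have "(\<Sum>j<n. q i j * Y j) = (\<Sum>j\<in>{off (psi k)..<off (psi k) + l (psi k)}. q i j * Y j)"
        using blk_le[OF p] by (intro sum.mono_neutral_right) (auto simp: Y_def)
      also have "\<dots> = (\<Sum>j\<in>{off (psi k)..<off (psi k) + l (psi k)}. q i j * y k (j - off (psi k)))"
        by (rule sum.cong) (auto simp: Y_def)
      also have "\<dots> = G k i" unfolding G_def by (subst sum_shift[symmetric]) simp
      finally show ?thesis .
    qed
    show ?case
    proof (intro allI impI)
      fix i assume i: "i < n"
      have "xs $ i - x (Suc k) $ i = (\<Sum>j<n. q i j * (xs $ j - x k $ j + z k $ j)) - (\<Sum>j<n. q i j * Y j)"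
        using Suc i F1[OF i] e2 by simp
      also have "\<dots> = (\<Sum>j<n. q i j * (xs $ j - x k $ j + z k $ j - Y j))"
        by (simp add: sum_subtractf[symmetric] right_diff_distrib)
      also have "\<dots> = (\<Sum>j<n. q i j * (xs $ j - x (Suc k) $ j + z (Suc k) $ j))"
        using e1 by (intro sum.cong) auto
      finally show "xs $ i - x (Suc k) $ i = (\<Sum>j<n. q i j * (xs $ j - x (Suc k) $ j + z (Suc k) $ j))" .
    qed
  qed
  show ?thesis
  proof (intro allI impI conjI)
    fix k i assume i: "i < n"
    show "x k $ i \<le> x (Suc k) $ i" using F1[OF i] Gnn[OF F4[OF Znn] i] by simp
    let ?u = "\<lambda>j. xs $ j - x (Suc k) $ j + z (Suc k) $ j"
    have un: "\<forall>j<n. ?u j \<ge> 0"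
    proof (rule nonneg_fix[where M=q and c="1 - m" and z="\<lambda>j. z (Suc k) $ j" and u="?u" and K=n])
      show "\<forall>i<n. \<forall>j<n. 0 \<le> q i j" using qnn by blast
      show "\<forall>j<n. (\<Sum>i<n. q i j) \<le> 1 - m" using qcol by simp
      show "\<forall>i<n. 0 \<le> z (Suc k) $ i" using Znn by blast
      show "\<forall>i<n. ?u i = z (Suc k) $ i + (\<Sum>j<n. q i j * ?u j)" using Inv[of "Suc k"] by auto
    qed (use m in simp)
    have "0 \<le> (\<Sum>j<n. q i j * ?u j)" using un qnn i by (intro sum_nonneg mult_nonneg_nonneg) auto
    moreover have "xs $ i - x (Suc k) $ i = (\<Sum>j<n. q i j * ?u j)" using Inv[of "Suc k"] i by blast
    ultimately show "x (Suc k) $ i \<le> xs $ i" by linarith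
  qed
qed

end
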